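(* Let $A$, $b$, $H$, $w_0$, $x_0=A^Tw_0$, and the sequences $r_k=b-Ax_k$, $x_k$ be as in the first-order CTA iteration in the context, and assume $Hr_k\ne0$ for all $k\ge0$ (so the sequences are infinite). (1) If $\operatorname{rank}(A)=m$, then $x_k$ converges to a solution of $Ax=b$; if $H=AA^T$, it converges to the minimum-norm solution of $Ax=b$. (2) $A^Tr_k\to0$. (3) If $Ax=b$ is solvable and $\{x_k\}$ is bounded, then $r_k\to0$ and every accumulation point of $\{x_k\}$ solves $Ax=b$. (4) If $Ax=b$ is solvable and $H=AA^T$, then for every $k$ there is $w_k\in\mathbb{R}^m$ with $x_k=A^Tw_k$; if $\{w_k\}$ is bounded, then $x_k$ converges to the minimum-norm solution $x_*$ of $Ax=b$.
   Context: $A\in\mathbb{R}^{m\times n}$, $b\in\mathbb{R}^m$; $H=AA^T$, or $H=A$ when $A$ is square symmetric positive semidefinite. For $r$ with $Hr\ne0$, $\alpha_{1,1}(r)=r^THr/r^TH^2r$ and $F_1(r)=r-\alpha_{1,1}(r)Hr$. Given $w_0\in\mathbb{R}^m$: $x_0=A^Tw_0$, $r_0=b-Ax_0$, $r_k=F_1(r_{k-1})$, and $x_k=x_{k-1}+\alpha_{1,1}(r_{k-1})r_{k-1}$ if $H=A$, $x_k=x_{k-1}+\alpha_{1,1}(r_{k-1})A^Tr_{k-1}$ if $H=AA^T$ (so $r_k=b-Ax_k$). *)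

theory Defs
  imports "HOL-Analysis.Analysis"
begin

definition alpha11 :: "real^'m^'m \<Rightarrow> real^'m \<Rightarrow> real" where
  "alpha11 H r = (r \<bullet> (H *v r)) / (r \<bullet> ((H ** H) *v r))"

definition F1 :: "real^'m^'m \<Rightarrow> real^'m \<Rightarrow> real^'m" where
  "F1 H r = r - alpha11 H r *\<^sub>R (H *v r)"

definition cta_r :: "real^'m^'m \<Rightarrow> real^'m \<Rightarrow> nat \<Rightarrow> real^'m" where
  "cta_r H r0 k = (F1 H ^^ k) r0"

text \<open>Iterates x_k = x_{k-1} + alpha_{1,1}(r_{k-1}) D r_{k-1}, where the direction
  matrix D is A^T (case H = A A^T) or the identity (case H = A).\<close>
primrec cta_x :: "real^'m^'m \<Rightarrow> real^'m^'n \<Rightarrow> real^'n \<Rightarrow> real^'m \<Rightarrow> nat \<Rightarrow> real^'n" where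
  "cta_x H D x0 r0 0 = x0"
| "cta_x H D x0 r0 (Suc k) =
     cta_x H D x0 r0 k + alpha11 H (cta_r H r0 k) *\<^sub>R (D *v cta_r H r0 k)"

definition min_norm_solution :: "real^'n^'m \<Rightarrow> real^'m \<Rightarrow> real^'n \<Rightarrow> bool" where
  "min_norm_solution A b xs \<longleftrightarrow> A *v xs = b \<and> (\<forall>y. A *v y = b \<longrightarrow> norm xs \<le> norm y)"

definition accum_point :: "(nat \<Rightarrow> 'a::topological_space) \<Rightarrow> 'a \<Rightarrow> bool" where
  "accum_point x l \<longleftrightarrow> (\<exists>\<sigma>. strict_mono \<sigma> \<and> (x \<circ> \<sigma>) \<longlonglongrightarrow> l)"

definition psd_matrix :: "real^'m^'m \<Rightarrow> bool" where
  "psd_matrix M \<longleftrightarrow> (\<forall>v. 0 \<le> v \<bullet> (M *v v))"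

end

theory Submission
  imports Defs
begin


lemma adj: "(x::real^'m) \<bullet> (M *v y) = (transpose M *v x) \<bullet> y"
  by (simp add: dot_lmul_matrix)

lemma sym_HH: "transpose H = H \<Longrightarrow> r \<bullet> ((H ** H) *v r) = (H *v r) \<bullet> (H *v (r::real^'m))"
  by (metis adj matrix_vector_mul_assoc)

lemma F1_norm:
  assumes "transpose H = H" "H *v r \<noteq> 0"
  shows "norm (F1 H r)^2 = norm r ^2 - (r \<bullet> (H *v r))^2 / ((H *v r) \<bullet> (H *v (r::real^'m)))"
proof -
  have h: "(H *v r) \<bullet> (H *v r) > 0" using assms(2) by simp
  have hs: "(H *v r) \<bullet> r = r \<bullet> (H *v r)" by (simp add: inner_commute)
  show ?thesis
    unfolding F1_def alpha11_def sym_HH[OF assms(1)] power2_norm_eq_inner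
    using h by (simp add: inner_diff_left inner_diff_right hs field_simps power2_eq_square)
qed

lemma cta_r_Suc: "cta_r H r0 (Suc k) = F1 H (cta_r H r0 k)"
  by (simp add: cta_r_def)

lemma t_to_0:
  assumes "transpose H = H" "\<forall>k. H *v cta_r H r0 k \<noteq> 0"
  shows "(\<lambda>k. (cta_r H r0 k \<bullet> (H *v cta_r H r0 k))^2 / ((H *v cta_r H r0 k) \<bullet> (H *v cta_r H r0 k))) \<longlonglongrightarrow> 0"
proof -
  define r where "r = cta_r H r0"
  define t where "t k = (r k \<bullet> (H *v r k))^2 / ((H *v r k) \<bullet> (H *v r k))" for k
  define n where "n k = norm (r k)^2" for k
  have eq: "n (Suc k) = n k - t k" for k
    unfolding n_def t_def r_def cta_r_Suc using F1_norm assms by blast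
  have tnn: "t k \<ge> 0" for k unfolding t_def by simp
  have dec: "decseq n" using eq tnn by (intro decseq_SucI) auto
  have "\<forall>i. 0 \<le> n i" unfolding n_def by simp
  then obtain L where L: "n \<longlonglongrightarrow> L" using decseq_convergent[OF dec] by blast
  have "(\<lambda>k. n k - n (Suc k)) \<longlonglongrightarrow> L - L"
    by (intro tendsto_diff L LIMSEQ_Suc[OF L])
  moreover have "t k = n k - n (Suc k)" for k using eq by simp
  ultimately show ?thesis unfolding t_def r_def by simp
qed



lemma psd_cs:
  assumes "transpose A = A" "psd_matrix A"
  shows "(u \<bullet> (A *v v))^2 \<le> (u \<bullet> (A *v u)) * (v \<bullet> (A *v (v::real^'m)))"
proof -
  define a where "a = u \<bullet> (A *v u)"
  define b where "b = u \<bullet> (A *v v)"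
  define c where "c = v \<bullet> (A *v v)"
  have vu: "v \<bullet> (A *v u) = b" unfolding b_def using adj[of v A u] assms(1) by (simp add: inner_commute)
  have q: "0 \<le> a + 2*t*b + t^2*c" for t
  proof -
    have "0 \<le> (u + t *\<^sub>R v) \<bullet> (A *v (u + t *\<^sub>R v))" using assms(2) psd_matrix_def by blast
    also have "\<dots> = a + 2*t*b + t^2*c"
      unfolding a_def c_def b_def[symmetric] using vu
      by (simp add: matrix_vector_right_distrib matrix_vector_mult_scaleR inner_add_left inner_add_right b_def power2_eq_square algebra_simps)
    finally show ?thesis .
  qed
  have a0: "a \<ge> 0" using q[of 0] by simp
  have c0: "c \<ge> 0" using assms(2) psd_matrix_def c_def by blast
  show ?thesis
  proof (cases "c = 0")
    case True
    show ?thesis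
    proof (cases "b = 0")
      case False
      have "0 \<le> a + 2*(-(a+1)/(2*b))*b" using q[of "-(a+1)/(2*b)"] True by simp
      then show ?thesis using False by (simp add: field_simps)
    qed (simp add: b_def[symmetric] a_def[symmetric] c_def[symmetric] True)
  next
    case False
    then have cp: "c > 0" using c0 by simp
    have "0 \<le> a + 2*(-b/c)*b + (-b/c)^2*c" by (rule q)
    then have "0 \<le> a*c - b^2" using cp by (simp add: field_simps power2_eq_square)
    then show ?thesis unfolding a_def[symmetric] b_def[symmetric] c_def[symmetric] by simp
  qed
qed

lemma grad1:
  fixes A :: "real^'n^'m"
  assumes "\<forall>k. (A ** transpose A) *v cta_r (A ** transpose A) r0 k \<noteq> 0"
  shows "(\<lambda>k. transpose A *v cta_r (A ** transpose A) r0 k) \<longlonglongrightarrow> 0"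
proof -
  define H where "H = A ** transpose A"
  define r where "r = cta_r H r0"
  define t where "t k = (r k \<bullet> (H *v r k))^2 / ((H *v r k) \<bullet> (H *v r k))" for k
  have Hs: "transpose H = H" unfolding H_def by (simp add: matrix_transpose_mul)
  have t0: "t \<longlonglongrightarrow> 0" unfolding t_def r_def using t_to_0[OF Hs] assms H_def by blast
  obtain K where K: "K > 0" "\<And>x. norm (A *v x) \<le> norm x * K"
    using bounded_linear.pos_bounded[OF matrix_vector_mul_bounded_linear[of A]] by blast
  have bd: "norm (transpose A *v r k) \<le> K * sqrt (t k)" for k
  proof -
    define g where "g = transpose A *v r k"
    have Hr: "H *v r k = A *v g" unfolding g_def H_def by (metis matrix_vector_mul_assoc)
    have rH: "r k \<bullet> (H *v r k) = norm g ^2"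
      unfolding Hr power2_norm_eq_inner by (simp add: adj g_def)
    have nz: "A *v g \<noteq> 0" using assms Hr H_def r_def by metis
    then have gnz: "g \<noteq> 0" by auto
    have le: "norm (A *v g)^2 \<le> (norm g * K)^2"
      using K(2)[of g] by (simp add: power_mono)
    have pos: "norm (A *v g)^2 > 0" using nz by simp
    have "t k = (norm g ^ 2)^2 / norm (A *v g)^2"
      unfolding t_def rH unfolding Hr power2_norm_eq_inner ..
    also have "\<dots> \<ge> (norm g ^ 2)^2 / (norm g * K)^2"
      using le pos gnz K(1) by (intro divide_left_mono) (auto intro!: mult_pos_pos)
    also have "(norm g ^ 2)^2 / (norm g * K)^2 = norm g ^ 2 / K^2"
      using gnz K(1) by (simp add: power_mult_distrib power2_eq_square)
    finally have "t k \<ge> norm g ^ 2 / K^2" .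
    then have "norm g ^2 \<le> K^2 * t k" using K(1) by (simp add: field_simps)
    then have "norm g \<le> sqrt (K^2 * t k)" by (rule real_le_rsqrt)
    then show ?thesis using K(1) unfolding g_def by (simp add: real_sqrt_mult)
  qed
  have lim: "(\<lambda>k. K * sqrt (t k)) \<longlonglongrightarrow> K * sqrt 0"
    by (intro tendsto_mult tendsto_const tendsto_real_sqrt t0)
  have "(\<lambda>k. transpose A *v r k) \<longlonglongrightarrow> 0"
    using Lim_null_comparison[OF always_eventually[OF allI[OF bd]]] lim by simp
  then show ?thesis unfolding r_def H_def .
qed

lemma grad2:
  fixes A :: "real^'m^'m"
  assumes sy: "transpose A = A" and ps: "psd_matrix A"
    and nz0: "\<forall>k. A *v cta_r A r0 k \<noteq> 0"
  shows "(\<lambda>k. transpose A *v cta_r A r0 k) \<longlonglongrightarrow> 0"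
proof -
  define r where "r = cta_r A r0"
  define t where "t k = (r k \<bullet> (A *v r k))^2 / ((A *v r k) \<bullet> (A *v r k))" for k
  have t0: "t \<longlonglongrightarrow> 0" unfolding t_def r_def using t_to_0[OF sy] nz0 by blast
  obtain K where K: "K > 0" "\<And>x. norm (A *v x) \<le> norm x * K"
    using bounded_linear.pos_bounded[OF matrix_vector_mul_bounded_linear[of A]] by blast
  have bd: "norm (A *v r k) \<le> K * sqrt (t k)" for k
  proof -
    define g where "g = A *v r k"
    have nz: "g \<noteq> 0" using nz0 g_def r_def by metis
    have gp: "norm g ^2 > 0" using nz by simp
    have cs: "(g \<bullet> (A *v r k))^2 \<le> (g \<bullet> (A *v g)) * (r k \<bullet> (A *v r k))"
      by (rule psd_cs[OF sy ps])
    have "g \<bullet> (A *v g) \<le> norm g * norm (A *v g)" by (rule norm_cauchy_schwarz)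
    also have "\<dots> \<le> norm g * (norm g * K)" using K(2)[of g] by (simp add: mult_left_mono)
    finally have gAg: "g \<bullet> (A *v g) \<le> K * norm g ^2" by (simp add: power2_eq_square algebra_simps)
    have s0: "r k \<bullet> (A *v r k) \<ge> 0" using ps psd_matrix_def by blast
    have "(norm g ^2)^2 \<le> (K * norm g^2) * (r k \<bullet> (A *v r k))"
    proof -
      have "g \<bullet> (A *v r k) = norm g ^2" unfolding g_def by (simp add: power2_norm_eq_inner)
      then have "(norm g ^2)^2 \<le> (g \<bullet> (A *v g)) * (r k \<bullet> (A *v r k))" using cs by simp
      also have "\<dots> \<le> (K * norm g^2) * (r k \<bullet> (A *v r k))" by (rule mult_right_mono[OF gAg s0])
      finally show ?thesis .
    qed
    then have "norm g^2 * norm g ^2 \<le> norm g^2 * (K * (r k \<bullet> (A *v r k)))"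
      by (simp add: power2_eq_square algebra_simps)
    then have l1: "norm g ^2 \<le> K * (r k \<bullet> (A *v r k))" using gp
      using mult_le_cancel_left_pos by blast
    have "(norm g^2)^2 \<le> (K * (r k \<bullet> (A *v r k)))^2"
      using l1 gp by (intro power_mono) auto
    then have "norm g ^2 \<le> K^2 * t k" unfolding t_def g_def[symmetric] power2_norm_eq_inner[symmetric]
      using gp by (simp add: field_simps power2_eq_square)
    then have "norm g \<le> sqrt (K^2 * t k)" by (rule real_le_rsqrt)
    then show ?thesis using K(1) unfolding g_def by (simp add: real_sqrt_mult)
  qed
  have lim: "(\<lambda>k. K * sqrt (t k)) \<longlonglongrightarrow> K * sqrt 0"
    by (intro tendsto_mult tendsto_const tendsto_real_sqrt t0)
  have "(\<lambda>k. A *v r k) \<longlonglongrightarrow> 0"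
    using Lim_null_comparison[OF always_eventually[OF allI[OF bd]]] lim by simp
  then show ?thesis unfolding r_def sy .
qed


lemma to0:
  fixes M :: "real^'n^'m" and v :: "nat \<Rightarrow> real^'n"
  assumes S: "subspace S" and inj: "\<forall>x\<in>S. M *v x = 0 \<longrightarrow> x = 0"
    and vS: "\<And>k. v k \<in> S" and lim: "(\<lambda>k. M *v v k) \<longlonglongrightarrow> 0"
  shows "v \<longlonglongrightarrow> 0"
proof -
  obtain e where e: "e > 0" "\<And>x. x \<in> S \<Longrightarrow> e * norm x \<le> norm (M *v x)"
    using injective_imp_isometric[OF closed_subspace[OF S] S matrix_vector_mul_bounded_linear inj] by blast
  have "(\<lambda>k. norm (M *v v k) / e) \<longlonglongrightarrow> 0 / e"
    by (intro tendsto_divide tendsto_norm_zero lim tendsto_const) (use e in auto)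
  moreover have bd: "norm (v k) \<le> norm (M *v v k) / e" for k
    using e(2)[OF vS[of k]] e(1) by (simp add: field_simps)
  ultimately show ?thesis
    using Lim_null_comparison[OF always_eventually[OF allI[OF bd]]] by simp
qed

lemma subspace_range: "subspace (range (\<lambda>w. (M::real^'n^'m) *v w))"
  by (intro linear_subspace_image matrix_vector_mul_linear subspace_UNIV)

lemma inj_T_on_range: "\<forall>x\<in>range (\<lambda>w. (A::real^'n^'m) *v w). transpose A *v x = 0 \<longrightarrow> x = 0"
proof (intro ballI impI)
  fix x assume "x \<in> range (\<lambda>w. A *v w)" and h: "transpose A *v x = 0"
  then obtain w where w: "x = A *v w" by blast
  have "w \<bullet> (transpose A *v x) = (A *v w) \<bullet> x" using adj[of w "transpose A" x] by (simp only: transpose_transpose)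
  then have "x \<bullet> x = 0" using h w by simp
  then show "x = 0" by simp
qed

lemma inj_on_rangeT: "\<forall>x\<in>range (\<lambda>w. transpose (A::real^'n^'m) *v w). A *v x = 0 \<longrightarrow> x = 0"
  using inj_T_on_range[of "transpose A"] by simp

lemma min_norm_exists:
  fixes A :: "real^'n^'m"
  assumes "A *v z = b"
  shows "\<exists>xs\<in>range (\<lambda>w. transpose A *v w). min_norm_solution A b xs"
proof -
  let ?S = "range (\<lambda>w. transpose A *v w)"
  obtain y q where y: "y \<in> span ?S" and q: "\<And>w. w \<in> span ?S \<Longrightarrow> orthogonal q w" and zq: "z = y + q"
    by (rule orthogonal_subspace_decomp_exists[of ?S z]) fast
  have sp: "span ?S = ?S" by (rule span_eq_iff[THEN iffD2, OF subspace_range])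
  have yS: "y \<in> ?S" using y unfolding sp .
  have "orthogonal q (transpose A *v (A *v q))" by (rule q[OF span_base[OF rangeI]])
  moreover have "q \<bullet> (transpose A *v (A *v q)) = (A *v q) \<bullet> (A *v q)"
    using adj[of q "transpose A" "A *v q"] by (simp only: transpose_transpose)
  ultimately have "(A *v q) \<bullet> (A *v q) = 0" unfolding orthogonal_def by simp
  then have Aq: "A *v q = 0" by simp
  have Ay: "A *v y = b" using assms zq Aq by (simp add: matrix_vector_right_distrib)
  have "min_norm_solution A b y"
    unfolding min_norm_solution_def
  proof (intro conjI allI impI Ay)
    fix y' assume y': "A *v y' = b"
    define d where "d = y' - y"
    have Ad: "A *v d = 0" using y' Ay d_def by (simp add: matrix_vector_mult_diff_distrib)
    obtain w where w: "y = transpose A *v w" using yS by blast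
    have "d \<bullet> (transpose A *v w) = (A *v d) \<bullet> w"
      using adj[of d "transpose A" w] by (simp only: transpose_transpose)
    then have yd: "y \<bullet> d = 0" unfolding w using Ad by (simp add: inner_commute[of _ d])
    have "norm y' ^2 = norm y ^2 + norm d ^2"
    proof -
      have "y' = y + d" using d_def by simp
      then show ?thesis using yd
        by (simp add: power2_norm_eq_inner inner_add_left inner_add_right inner_commute[of d y])
    qed
    then have "norm y ^2 \<le> norm y' ^2" by simp
    then show "norm y \<le> norm y'" by (rule power2_le_imp_le) simp
  qed
  then show ?thesis using yS by (rule rev_bexI[rotated])
qed

lemma accum:
  fixes A :: "real^'n^'m"
  assumes rx: "\<And>k. r k = b - A *v x k" and r0: "r \<longlonglongrightarrow> 0" and ap: "accum_point x l"
  shows "A *v l = b"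
proof -
  obtain \<sigma> where s: "strict_mono \<sigma>" "(x \<circ> \<sigma>) \<longlonglongrightarrow> l" using ap accum_point_def by blast
  have "(\<lambda>k. A *v (x \<circ> \<sigma>) k) \<longlonglongrightarrow> A *v l"
    by (intro bounded_linear.tendsto[OF matrix_vector_mul_bounded_linear] s(2))
  moreover have "(\<lambda>k. b - r (\<sigma> k)) \<longlonglongrightarrow> b - 0"
    by (intro tendsto_diff tendsto_const LIMSEQ_subseq_LIMSEQ[OF r0 s(1), unfolded o_def])
  moreover have "(\<lambda>k. A *v (x \<circ> \<sigma>) k) = (\<lambda>k. b - r (\<sigma> k))" using rx by auto
  ultimately show ?thesis using LIMSEQ_unique by fastforce
qed

lemma sys1_rx:
  fixes A :: "real^'n^'m"
  shows "cta_r (A ** transpose A) (b - A *v x0) k = b - A *v cta_x (A ** transpose A) (transpose A) x0 (b - A *v x0) k"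
proof (induction k)
  case (Suc k)
  have e: "A *v (x + c *\<^sub>R (transpose A *v r)) = A *v x + c *\<^sub>R ((A ** transpose A) *v r)" for x r c
    by (simp add: matrix_vector_right_distrib matrix_vector_mult_scaleR matrix_vector_mul_assoc del: transpose_matrix_vector)
  show ?case unfolding cta_r_Suc cta_x.simps F1_def Suc e
    by (simp add: algebra_simps del: transpose_matrix_vector)
qed (simp add: cta_r_def)

lemma sys1_range:
  fixes A :: "real^'n^'m"
  shows "cta_x H (transpose A) (transpose A *v w0) r0 k \<in> range (\<lambda>w. transpose A *v w)"
proof (induction k)
  case (Suc k)
  then obtain w where w: "cta_x H (transpose A) (transpose A *v w0) r0 k = transpose A *v w" by blast
  show ?case unfolding cta_x.simps w
    by (rule image_eqI[where x="w + alpha11 H (cta_r H r0 k) *\<^sub>R cta_r H r0 k"])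
       (simp_all add: matrix_vector_right_distrib matrix_vector_mult_scaleR)
qed simp

lemma sys2_rx:
  fixes A :: "real^'m^'m"
  shows "cta_r A (b - A *v x0) k = b - A *v cta_x A (mat 1) x0 (b - A *v x0) k"
proof (induction k)
  case (Suc k)
  show ?case unfolding cta_r_Suc cta_x.simps F1_def Suc
    by (simp add: matrix_vector_right_distrib matrix_vector_mult_scaleR algebra_simps)
qed (simp add: cta_r_def)



lemma sys1_core:
  fixes A :: "real^'n^'m"
  assumes HH: "H = A ** transpose A" and x0d: "x0 = transpose A *v w0" and r0d: "r0 = b - A *v x0"
    and rd: "r = cta_r H r0" and xd: "x = cta_x H (transpose A) x0 r0" and nz: "\<forall>k. H *v r k \<noteq> 0"
  shows "(rank A = CARD('m) \<longrightarrow>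
             (\<exists>xs. A *v xs = b \<and> x \<longlonglongrightarrow> xs) \<and>
             (\<exists>xs. min_norm_solution A b xs \<and> x \<longlonglongrightarrow> xs))
          \<and> (\<lambda>k. transpose A *v r k) \<longlonglongrightarrow> 0
          \<and> ((\<exists>z. A *v z = b) \<and> bounded (range x) \<longrightarrow>
               r \<longlonglongrightarrow> 0 \<and> (\<forall>l. accum_point x l \<longrightarrow> A *v l = b))
          \<and> ((\<exists>z. A *v z = b) \<longrightarrow>
               (\<exists>w. \<forall>k. x k = transpose A *v w k) \<and>
               (\<exists>xs. min_norm_solution A b xs \<and>
                  (\<forall>w. (\<forall>k. x k = transpose A *v w k) \<and> bounded (range w) \<longrightarrow>
                        x \<longlonglongrightarrow> xs)))"
proof -
  have rx: "r k = b - A *v x k" for k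
    unfolding rd xd HH r0d by (rule sys1_rx)
  have g: "(\<lambda>k. transpose A *v r k) \<longlonglongrightarrow> 0"
    using grad1[of A r0] nz unfolding rd HH by blast
  have R: "r \<longlonglongrightarrow> 0" if "A *v z = b" for z
  proof (rule to0[OF subspace_range inj_T_on_range _ g])
    fix k
    have "r k = A *v (z - x k)" using rx that by (simp add: matrix_vector_mult_diff_distrib)
    then show "r k \<in> range (\<lambda>w. A *v w)" by blast
  qed
  have xr: "x k \<in> range (\<lambda>w. transpose A *v w)" for k
    unfolding xd x0d by (rule sys1_range)
  have X: "x \<longlonglongrightarrow> xs" if "A *v z = b" "xs \<in> range (\<lambda>w. transpose A *v w)" "A *v xs = b" for z xs
  proof -
    have v0: "(\<lambda>k. x k - xs) \<longlonglongrightarrow> 0"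
    proof (rule to0[OF subspace_range inj_on_rangeT])
      fix k show "x k - xs \<in> range (\<lambda>w. transpose A *v w)"
        using subspace_diff[OF subspace_range xr[of k] that(2)] .
      have "(\<lambda>k. - r k) \<longlonglongrightarrow> - 0" by (intro tendsto_minus R[OF that(1)])
      moreover have "A *v (x k - xs) = - r k" for k
        using rx[of k] that(3) by (simp add: matrix_vector_mult_diff_distrib)
      ultimately show "(\<lambda>k. A *v (x k - xs)) \<longlonglongrightarrow> 0" by simp
    qed
    have "(\<lambda>k. (x k - xs) + xs) \<longlonglongrightarrow> 0 + xs" by (intro tendsto_add v0 tendsto_const)
    then show ?thesis by simp
  qed
  have MN: "\<exists>xs. min_norm_solution A b xs \<and> x \<longlonglongrightarrow> xs" if zz: "A *v z = b" for z
  proof -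
    obtain xs where xs: "xs \<in> range (\<lambda>w. transpose A *v w)" "min_norm_solution A b xs"
      using min_norm_exists[OF zz] by blast
    then have "A *v xs = b" unfolding min_norm_solution_def by blast
    then show ?thesis using X[OF zz xs(1)] xs(2) by blast
  qed
  have P1: "rank A = CARD('m) \<longrightarrow>
             (\<exists>xs. A *v xs = b \<and> x \<longlonglongrightarrow> xs) \<and>
             (\<exists>xs. min_norm_solution A b xs \<and> x \<longlonglongrightarrow> xs)"
  proof
    assume "rank A = CARD('m)"
    then have "surj ((*v) A)" using full_rank_surjective by blast
    then obtain z where z: "A *v z = b" by (metis surjD)
    then obtain xs where "min_norm_solution A b xs" "x \<longlonglongrightarrow> xs" using MN by blast
    then show "(\<exists>xs. A *v xs = b \<and> x \<longlonglongrightarrow> xs) \<and> (\<exists>xs. min_norm_solution A b xs \<and> x \<longlonglongrightarrow> xs)"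
      unfolding min_norm_solution_def by blast
  qed
  have P3: "(\<exists>z. A *v z = b) \<and> bounded (range x) \<longrightarrow>
               r \<longlonglongrightarrow> 0 \<and> (\<forall>l. accum_point x l \<longrightarrow> A *v l = b)"
  proof (intro impI conjI allI)
    assume "(\<exists>z. A *v z = b) \<and> bounded (range x)"
    then obtain z where z: "A *v z = b" by blast
    show r0: "r \<longlonglongrightarrow> 0" by (rule R[OF z])
    fix l assume "accum_point x l"
    then show "A *v l = b" using accum[OF rx r0] by blast
  qed
  have P4: "(\<exists>z. A *v z = b) \<longrightarrow>
               (\<exists>w. \<forall>k. x k = transpose A *v w k) \<and>
               (\<exists>xs. min_norm_solution A b xs \<and>
                  (\<forall>w. (\<forall>k. x k = transpose A *v w k) \<and> bounded (range w) \<longrightarrow>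
                        x \<longlonglongrightarrow> xs))"
  proof
    assume "\<exists>z. A *v z = b"
    then obtain z where z: "A *v z = b" by blast
    have "\<forall>k. \<exists>w. x k = transpose A *v w" using xr by blast
    then have W: "\<exists>w. \<forall>k. x k = transpose A *v w k" by (rule choice)
    obtain xs where "min_norm_solution A b xs" "x \<longlonglongrightarrow> xs" using MN[OF z] by blast
    then show "(\<exists>w. \<forall>k. x k = transpose A *v w k) \<and>
               (\<exists>xs. min_norm_solution A b xs \<and>
                  (\<forall>w. (\<forall>k. x k = transpose A *v w k) \<and> bounded (range w) \<longrightarrow>
                        x \<longlonglongrightarrow> xs))" using W by blast
  qed
  show ?thesis using P1 g P3 P4 by (intro conjI)
qed

lemma sys2_core:
  fixes A :: "real^'m^'m"
  assumes HH: "H = A" and x0d: "x0 = transpose A *v w0" and r0d: "r0 = b - A *v x0"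
    and rd: "r = cta_r H r0" and xd: "x = cta_x H (mat 1) x0 r0"
    and sy: "transpose A = A" and ps: "psd_matrix A" and nz: "\<forall>k. H *v r k \<noteq> 0"
  shows "(rank A = CARD('m) \<longrightarrow> (\<exists>xs. A *v xs = b \<and> x \<longlonglongrightarrow> xs))
          \<and> (\<lambda>k. transpose A *v r k) \<longlonglongrightarrow> 0
          \<and> ((\<exists>z. A *v z = b) \<and> bounded (range x) \<longrightarrow>
               r \<longlonglongrightarrow> 0 \<and> (\<forall>l. accum_point x l \<longrightarrow> A *v l = b))"
proof -
  have rx: "r k = b - A *v x k" for k
    unfolding rd xd HH r0d by (rule sys2_rx)
  have g: "(\<lambda>k. transpose A *v r k) \<longlonglongrightarrow> 0"
    using grad2[OF sy ps, of r0] nz unfolding rd HH by blast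
  have R: "r \<longlonglongrightarrow> 0" if "A *v z = b" for z
  proof (rule to0[OF subspace_range inj_T_on_range _ g])
    fix k
    have "r k = A *v (z - x k)" using rx that by (simp add: matrix_vector_mult_diff_distrib)
    then show "r k \<in> range (\<lambda>w. A *v w)" by blast
  qed
  have P1: "rank A = CARD('m) \<longrightarrow> (\<exists>xs. A *v xs = b \<and> x \<longlonglongrightarrow> xs)"
  proof
    assume "rank A = CARD('m)"
    then have "surj ((*v) A)" using full_rank_surjective by blast
    then obtain z where z: "A *v z = b" by (metis surjD)
    have inj: "inj ((*v) A)" using \<open>rank A = CARD('m)\<close> full_rank_injective[of A] by simp
    have "(\<lambda>k. x k - z) \<longlonglongrightarrow> 0"
    proof (rule to0[OF subspace_UNIV])
      show "\<forall>v\<in>UNIV. A *v v = 0 \<longrightarrow> v = 0"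
        using inj by (metis injD matrix_vector_mult_0_right)
      show "x k - z \<in> UNIV" for k by simp
      have "(\<lambda>k. - r k) \<longlonglongrightarrow> - 0" by (intro tendsto_minus R[OF z])
      moreover have "A *v (x k - z) = - r k" for k
        using rx[of k] z by (simp add: matrix_vector_mult_diff_distrib)
      ultimately show "(\<lambda>k. A *v (x k - z)) \<longlonglongrightarrow> 0" by simp
    qed
    then have "(\<lambda>k. (x k - z) + z) \<longlonglongrightarrow> 0 + z" by (intro tendsto_add tendsto_const)
    then show "\<exists>xs. A *v xs = b \<and> x \<longlonglongrightarrow> xs" using z by auto
  qed
  have P3: "(\<exists>z. A *v z = b) \<and> bounded (range x) \<longrightarrow>
               r \<longlonglongrightarrow> 0 \<and> (\<forall>l. accum_point x l \<longrightarrow> A *v l = b)"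
  proof (intro impI conjI allI)
    assume "(\<exists>z. A *v z = b) \<and> bounded (range x)"
    then obtain z where z: "A *v z = b" by blast
    show r0: "r \<longlonglongrightarrow> 0" by (rule R[OF z])
    fix l assume "accum_point x l"
    then show "A *v l = b" using accum[OF rx r0] by blast
  qed
  show ?thesis using P1 g P3 by (intro conjI)
qed


theorem mainTheorem6:
  shows
  "(\<forall>(A :: real^'n^'m) (b :: real^'m) (w0 :: real^'m).
      let H = A ** transpose A; x0 = transpose A *v w0; r0 = b - A *v x0;
          r = cta_r H r0; x = cta_x H (transpose A) x0 r0
      in (\<forall>k. H *v r k \<noteq> 0) \<longrightarrow>
         ((rank A = CARD('m) \<longrightarrow>
             (\<exists>xs. A *v xs = b \<and> x \<longlonglongrightarrow> xs) \<and>
             (\<exists>xs. min_norm_solution A b xs \<and> x \<longlonglongrightarrow> xs))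
          \<and> (\<lambda>k. transpose A *v r k) \<longlonglongrightarrow> 0
          \<and> ((\<exists>z. A *v z = b) \<and> bounded (range x) \<longrightarrow>
               r \<longlonglongrightarrow> 0 \<and> (\<forall>l. accum_point x l \<longrightarrow> A *v l = b))
          \<and> ((\<exists>z. A *v z = b) \<longrightarrow>
               (\<exists>w. \<forall>k. x k = transpose A *v w k) \<and>
               (\<exists>xs. min_norm_solution A b xs \<and>
                  (\<forall>w. (\<forall>k. x k = transpose A *v w k) \<and> bounded (range w) \<longrightarrow>
                        x \<longlonglongrightarrow> xs)))))
   \<and>
   (\<forall>(A :: real^'m^'m) (b :: real^'m) (w0 :: real^'m).
      let H = A; x0 = transpose A *v w0; r0 = b - A *v x0;
          r = cta_r H r0; x = cta_x H (mat 1) x0 r0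
      in transpose A = A \<and> psd_matrix A \<and> (\<forall>k. H *v r k \<noteq> 0) \<longrightarrow>
         ((rank A = CARD('m) \<longrightarrow> (\<exists>xs. A *v xs = b \<and> x \<longlonglongrightarrow> xs))
          \<and> (\<lambda>k. transpose A *v r k) \<longlonglongrightarrow> 0
          \<and> ((\<exists>z. A *v z = b) \<and> bounded (range x) \<longrightarrow>
               r \<longlonglongrightarrow> 0 \<and> (\<forall>l. accum_point x l \<longrightarrow> A *v l = b))))"
  unfolding Let_def
  apply (rule conjI)
   apply (intro allI impI)
   apply (rule sys1_core[OF refl refl refl refl refl], assumption)
  apply (intro allI impI)
  apply (elim conjE)
  apply (rule sys2_core[OF refl refl refl refl refl], assumption+)
  done

end
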